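(* Let $n\ge 2$, $k\ge 1$, $i_1,\dots,i_k\in\{1,\dots,n-1\}$ and $a_1,\dots,a_k\in\mathbb{Z}$. Then $$V_n(x_{i_1}^{a_1}x_{i_2}^{a_2}\cdots x_{i_k}^{a_k})(s)=\frac{1}{(s^2+1)^k}\sum_{(j_1,\dots,j_k)\in\{0,1\}^k}P^{[a_1]}_{j_1}(s)\cdots P^{[a_k]}_{j_k}(s)\,V_n(x_{i_1}^{j_1}\cdots x_{i_k}^{j_k})(s),$$ where for $a\in\mathbb{Z}$, $P_0^{[a]}(s)=s^{3a}+(-1)^a s^{a+2}$ and $P_1^{[a]}(s)=s^{3a-1}+(-1)^{a+1}s^{a-1}$ (Laurent polynomials in $s$).
   Context: $\mathcal{B}_n$ is the Artin braid group on $n$ strands with standard generators $x_1,\dots,x_{n-1}$ ($x_i$ crosses strands $i$ and $i+1$); $\widehat{\beta}$ denotes the closure of $\beta\in\mathcal{B}_n$, an oriented link. The Jones polynomial $V_L$ of an oriented link $L$ is the Laurent polynomial in $q^{1/2}$ with value $1$ on the unknot satisfying $q^{-1}V_{L_+}-qV_{L_-}=(q^{1/2}-q^{-1/2})V_{L_0}$. One substitutes $s=q^{-1/2}$, so Jones polynomials are Laurent polynomials in $s$. For $\beta\in\mathcal{B}_n$, $V_n(\beta)=V(\widehat{\beta})$. Crossing conventions are those for which, in a braid word, the closures of $\alpha x_i^{e+2}\gamma$, $\alpha x_i^{e+1}\gamma$, $\alpha x_i^{e}\gamma$ play the roles of $L_-,L_0,L_+$ respectively (e.g. $V_2(x_1^2)=-s-s^5$).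 *)

theory Defs
  imports "HOL-Analysis.Analysis"
begin

text \<open>A braid word in the standard generators: a list of pairs (i, a) standing for
  the factor x_i^a.  The word [(i1,a1),...,(ik,ak)] is x_i1^a1 ... x_ik^ak.\<close>
type_synonym braid_word = "(nat \<times> int) list"

definition braid_letters :: "braid_word \<Rightarrow> (nat \<times> int) list" where
  "braid_letters w = concat (map (\<lambda>(i, a). replicate (nat \<bar>a\<bar>) (i, sgn a)) w)"

text \<open>Kauffman states: one boolean per letter (True = horizontal smoothing e_i,
  False = vertical smoothing).  Nodes of the closed diagram: (level, strand position);
  letter t joins level t to level (t+1) mod m (closure).\<close>
definition state_edges :: "nat \<Rightarrow> (nat \<times> int) list \<Rightarrow> bool list \<Rightarrow> ((nat \<times> nat) \<times> (nat \<times> nat)) set" where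
  "state_edges n ls bs = (\<Union>t<length ls.
     (let i = fst (ls ! t); t' = Suc t mod length ls in
      if bs ! t then
        {((t, p), (t', p)) | p. p \<in> {1..n} - {i, Suc i}} \<union>
        {((t, i), (t, Suc i)), ((t', i), (t', Suc i))}
      else {((t, p), (t', p)) | p. p \<in> {1..n}}))"

definition state_nodes :: "nat \<Rightarrow> (nat \<times> int) list \<Rightarrow> (nat \<times> nat) set" where
  "state_nodes n ls = {0..<max 1 (length ls)} \<times> {1..n}"

definition state_loops :: "nat \<Rightarrow> (nat \<times> int) list \<Rightarrow> bool list \<Rightarrow> nat" where
  "state_loops n ls bs =
     card (state_nodes n ls // ((state_edges n ls bs \<union> (state_edges n ls bs)\<inverse>)\<^sup>*))"

text \<open>Jones polynomial of the closure of a braid word, evaluated at s (s = q^(-1/2)), via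
  the Kauffman bracket state sum: with A^2 = s, a letter x_i^e (e = +-1, a crossing of sign -e)
  gets weight A^e (vertical) or A^-e (horizontal); multiplying by (-A^3)^(-writhe) and
  normalising by the loop value d = -A^2 - A^-2 = -s - 1/s gives the formula below.\<close>
definition jones_braid :: "nat \<Rightarrow> braid_word \<Rightarrow> real \<Rightarrow> real" where
  "jones_braid n w s =
     (let ls = braid_letters w; m = length ls; d = - s - inverse s in
      (-1) powi (\<Sum>t<m. snd (ls ! t)) *
      (\<Sum>bs \<in> {bs. length bs = m}.
         (\<Prod>t<m. if bs ! t then s powi (2 * snd (ls ! t)) else s powi (snd (ls ! t)))
         * d ^ (state_loops n ls bs - 1)))"

definition P0 :: "int \<Rightarrow> real \<Rightarrow> real" where
  "P0 a s = s powi (3 * a) + (-1) powi a * s powi (a + 2)"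

definition P1 :: "int \<Rightarrow> real \<Rightarrow> real" where
  "P1 a s = s powi (3 * a - 1) + (-1) powi (a + 1) * s powi (a - 1)"

definition Pj :: "int \<Rightarrow> nat \<Rightarrow> real \<Rightarrow> real" where
  "Pj a j s = (if j = 0 then P0 a s else P1 a s)"


end

theory Submission
  imports Defs
begin


definition SR :: "('a \<times> 'a) set \<Rightarrow> ('a \<times> 'a) set" where
  "SR E = (E \<union> E\<inverse>)\<^sup>*"

lemma equiv_SR: "equiv UNIV (SR E)"
proof -
  have "sym (E \<union> E\<inverse>)" by (simp add: sym_Un_converse)
  then have "sym ((E \<union> E\<inverse>)\<^sup>*)" by (rule sym_rtrancl)
  then show ?thesis unfolding SR_def equiv_def refl_on_def
    using trans_rtrancl by auto
qed

lemma SR_edge: "(a,b) \<in> E \<Longrightarrow> (a,b) \<in> SR E" "(a,b) \<in> E \<Longrightarrow> (b,a) \<in> SR E"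
  unfolding SR_def by auto

lemma SR_refl: "(a,a) \<in> SR E" unfolding SR_def by auto

lemma SR_trans: "(a,b) \<in> SR E \<Longrightarrow> (b,c) \<in> SR E \<Longrightarrow> (a,c) \<in> SR E"
  unfolding SR_def by auto

lemma SR_sym: "(a,b) \<in> SR E \<Longrightarrow> (b,a) \<in> SR E"
  using equiv_SR[of E] unfolding equiv_def sym_def by blast

lemma card_image_kernel:
  assumes "\<forall>x\<in>V. \<forall>y\<in>V. f x = f y \<longleftrightarrow> g x = g y"
  shows "card (f ` V) = card (g ` V)"
proof -
  have "bij_betw (\<lambda>z. g (inv_into V f z)) (f ` V) (g ` V)"
    unfolding bij_betw_def inj_on_def
  proof (intro conjI ballI impI)
    fix x y assume "x \<in> f ` V" "y \<in> f ` V" "g (inv_into V f x) = g (inv_into V f y)"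
    then obtain x0 y0 where "x0 \<in> V" "y0 \<in> V" "x = f x0" "y = f y0" by auto
    moreover note eq = \<open>g (inv_into V f x) = g (inv_into V f y)\<close>
    ultimately have "f (inv_into V f x) = f (inv_into V f y)"
      using assms inv_into_into by (metis (no_types, lifting) imageI)
    then show "x = y" using \<open>x \<in> f ` V\<close> \<open>y \<in> f ` V\<close> by (simp add: f_inv_into_f)
  next
    show "(\<lambda>z. g (inv_into V f z)) ` f ` V = g ` V"
    proof
      show "(\<lambda>z. g (inv_into V f z)) ` f ` V \<subseteq> g ` V" by (auto intro: inv_into_into)
      show "g ` V \<subseteq> (\<lambda>z. g (inv_into V f z)) ` f ` V"
      proof
        fix z assume "z \<in> g ` V"
        then obtain x where x: "x \<in> V" "z = g x" by auto
        have "f (inv_into V f (f x)) = f x" using x by (simp add: f_inv_into_f)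
        then have "g (inv_into V f (f x)) = g x" using assms x inv_into_into[of "f x" f V] by blast
        then show "z \<in> (\<lambda>z. g (inv_into V f z)) ` f ` V" using x by force
      qed
    qed
  qed
  then show ?thesis by (rule bij_betw_same_card)
qed

lemma quotient_image: "V // R = (\<lambda>x. R``{x}) ` V"
  unfolding quotient_def by auto

lemma card_quot_map:
  assumes "equiv UNIV R" "equiv UNIV R'" "\<phi> ` V = V'"
    and "\<forall>x\<in>V. \<forall>y\<in>V. (\<phi> x, \<phi> y) \<in> R' \<longleftrightarrow> (x,y) \<in> R"
  shows "card (V // R) = card (V' // R')"
proof -
  have "V' // R' = (\<lambda>x. R'``{\<phi> x}) ` V"
    unfolding quotient_image assms(3)[symmetric] by auto
  moreover have "card ((\<lambda>x. R``{x}) ` V) = card ((\<lambda>x. R'``{\<phi> x}) ` V)"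
    apply (rule card_image_kernel)
    using assms(4) eq_equiv_class_iff[OF assms(1)] eq_equiv_class_iff[OF assms(2)] by auto
  ultimately show ?thesis by (simp add: quotient_image)
qed

lemma lift_iff:
  assumes A: "\<And>a b. (a,b)\<in>E \<Longrightarrow> (\<phi> a, \<phi> b) \<in> SR E'"
    and E'V: "\<And>u v. (u,v)\<in>E' \<Longrightarrow> u \<in> \<phi> ` V \<and> v \<in> \<phi> ` V"
    and B: "\<And>u v. (u,v)\<in>E' \<Longrightarrow> \<exists>a\<in>V. \<exists>b\<in>V. \<phi> a = u \<and> \<phi> b = v \<and> (a,b) \<in> SR E"
    and C: "\<And>a b. a\<in>V \<Longrightarrow> b\<in>V \<Longrightarrow> \<phi> a = \<phi> b \<Longrightarrow> (a,b) \<in> SR E"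
    and x: "x \<in> V" and y: "y \<in> V"
  shows "(\<phi> x, \<phi> y) \<in> SR E' \<longleftrightarrow> (x,y) \<in> SR E"
proof
  assume "(x,y) \<in> SR E"
  then have "(x,y) \<in> (E \<union> E\<inverse>)\<^sup>*" by (simp add: SR_def)
  then show "(\<phi> x, \<phi> y) \<in> SR E'"
  proof (induction rule: rtrancl_induct)
    case base then show ?case by (rule SR_refl)
  next
    case (step y z)
    have "(\<phi> y, \<phi> z) \<in> SR E'"
    proof (cases "(y,z) \<in> E")
      case True then show ?thesis by (rule A)
    next
      case False then have "(z,y) \<in> E" using step(2) by simp
      then show ?thesis using A SR_sym by metis
    qed
    then show ?case using step(3) SR_trans by metis
  qed
next
  assume "(\<phi> x, \<phi> y) \<in> SR E'"
  then have P: "(\<phi> x, \<phi> y) \<in> (E' \<union> E'\<inverse>)\<^sup>*" by (simp add: SR_def)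
  have "(\<phi> x, w) \<in> (E' \<union> E'\<inverse>)\<^sup>* \<Longrightarrow> \<forall>y\<in>V. \<phi> y = w \<longrightarrow> (x,y) \<in> SR E" for w
  proof (induction rule: rtrancl_induct)
    case base show ?case
    proof (intro ballI impI)
      fix y assume "y \<in> V" "\<phi> y = \<phi> x"
      then show "(x,y) \<in> SR E" using C x by simp
    qed
  next
    case (step w v)
    have wv: "(w,v) \<in> E' \<or> (v,w) \<in> E'" using step(2) by simp
    have "w \<in> \<phi> ` V" using wv E'V by metis
    then obtain y0 where y0: "y0 \<in> V" "\<phi> y0 = w" by auto
    have xy0: "(x,y0) \<in> SR E" using step(3) y0 by simp
    have "\<exists>a\<in>V. \<exists>b\<in>V. \<phi> a = w \<and> \<phi> b = v \<and> (a,b) \<in> SR E"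
    proof (cases "(w,v) \<in> E'")
      case True then show ?thesis by (rule B)
    next
      case False then have "(v,w) \<in> E'" using wv by simp
      then obtain a b where "a \<in> V" "b \<in> V" "\<phi> a = v" "\<phi> b = w" "(a,b) \<in> SR E"
        using B by blast
      then show ?thesis using SR_sym by metis
    qed
    then obtain a b where ab: "a \<in> V" "b \<in> V" "\<phi> a = w" "\<phi> b = v" "(a,b) \<in> SR E"
      by blast
    show ?case
    proof (intro ballI impI)
      fix y assume yy: "y \<in> V" "\<phi> y = v"
      have "(y0, a) \<in> SR E" using C y0 ab by simp
      moreover have "(b, y) \<in> SR E" using C ab yy by simp
      ultimately show "(x,y) \<in> SR E" using xy0 ab(5) SR_trans by metis
    qed
  qed
  then show "(x,y) \<in> SR E" using P y by simp
qed

lemma card_quot_remove: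
  assumes eq: "equiv UNIV R" and fin: "finite V" and c: "c \<in> V" and sub: "R``{c} \<subseteq> V"
  shows "card (V // R) = card ((V - R``{c}) // R) + 1"
proof -
  have "V // R = insert (R``{c}) ((V - R``{c}) // R)"
    unfolding quotient_image using c sub eq_equiv_class_iff[OF eq] by auto
  moreover have "R``{c} \<notin> (V - R``{c}) // R"
  proof
    assume "R``{c} \<in> (V - R``{c}) // R"
    then obtain x where "x \<in> V" "x \<notin> R``{c}" "R``{c} = R``{x}" unfolding quotient_image by auto
    then show False using eq_equiv_class_iff[OF eq, of c x] by auto
  qed
  moreover have "finite ((V - R``{c}) // R)" unfolding quotient_image using fin by auto
  ultimately show ?thesis by simp
qed


definition LE :: "nat \<Rightarrow> nat \<Rightarrow> bool \<Rightarrow> nat \<Rightarrow> nat \<Rightarrow> ((nat \<times> nat) \<times> (nat \<times> nat)) set" where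
  "LE n i b t t' = (if b then
        {((t, p), (t', p)) | p. p \<in> {1..n} - {i, Suc i}} \<union>
        {((t, i), (t, Suc i)), ((t', i), (t', Suc i))}
      else {((t, p), (t', p)) | p. p \<in> {1..n}})"

lemma state_edges_LE:
  "state_edges n ls bs = (\<Union>u<length ls. LE n (fst (ls!u)) (bs!u) u (Suc u mod length ls))"
  unfolding state_edges_def LE_def Let_def by simp

definition phi :: "(nat \<Rightarrow> nat) \<Rightarrow> nat \<times> nat \<Rightarrow> nat \<times> nat" where
  "phi \<psi> x = (\<psi> (fst x), snd x)"

lemma LE_img: "map_prod (phi \<psi>) (phi \<psi>) ` LE n i b t t' = LE n i b (\<psi> t) (\<psi> t')"
  unfolding LE_def phi_def by (auto simp: image_iff)

lemma LE_nodes: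
  assumes "1 \<le> i" "Suc i \<le> n" "t \<in> T" "t' \<in> T" "(a,c) \<in> LE n i b t t'"
  shows "a \<in> T \<times> {1..n} \<and> c \<in> T \<times> {1..n}"
  using assms unfolding LE_def by (auto split: if_splits)

definition psi :: "nat \<Rightarrow> nat \<Rightarrow> nat \<Rightarrow> nat" where
  "psi m r l = (if l \<le> r then l else l - 1) mod (m - 1)"

definition uprime :: "nat \<Rightarrow> nat \<Rightarrow> nat" where
  "uprime r u = (if u < r then u else u - 1)"

lemma psi_u:
  assumes "r < m" "u < m" "u \<noteq> r"
  shows "psi m r u = uprime r u" "uprime r u < m - 1"
    "psi m r (Suc u mod m) = Suc (uprime r u) mod (m - 1)"
proof -
  show 1: "uprime r u < m - 1" using assms by (auto simp: uprime_def)
  show "psi m r u = uprime r u" using 1 assms by (auto simp: psi_def uprime_def)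
  show "psi m r (Suc u mod m) = Suc (uprime r u) mod (m - 1)"
  proof (cases "Suc u < m")
    case True
    then show ?thesis using assms by (auto simp: psi_def uprime_def)
  next
    case False
    then have "Suc u = m" using assms by simp
    then show ?thesis using assms by (auto simp: psi_def uprime_def)
  qed
qed

lemma psi_r: assumes "r < m" shows "psi m r (Suc r mod m) = psi m r r"
proof (cases "Suc r < m")
  case True then show ?thesis by (simp add: psi_def)
next
  case False then have "m = Suc r" using assms by simp
  then show ?thesis by (simp add: psi_def)
qed

lemma psi_surj:
  assumes "r < m" "u' < m - 1"
  shows "\<exists>u<m. u \<noteq> r \<and> uprime r u = u'"
  using assms by (intro exI[of _ "if u' < r then u' else Suc u'"]) (auto simp: uprime_def)

lemma psi_range: assumes "l < m" shows "psi m r l < max 1 (m - 1)"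
proof (cases "m - 1 = 0")
  case True then show ?thesis using assms by (auto simp: psi_def)
next
  case False then show ?thesis by (simp add: psi_def)
qed

lemma psi_inj:
  assumes "r < m" "l1 < m" "l2 < m" "psi m r l1 = psi m r l2" "l1 \<noteq> l2"
  shows "(l1 = r \<and> l2 = Suc r mod m) \<or> (l2 = r \<and> l1 = Suc r mod m)"
proof (cases "Suc r < m")
  case True
  then have "psi m r l = (if l \<le> r then l else l - 1)" if "l < m" for l
    using that by (auto simp: psi_def)
  then show ?thesis using assms True by (auto split: if_splits)
next
  case False
  then have m: "m = Suc r" using assms by simp
  then have "psi m r l = (if l = r then 0 else l)" if "l < m" for l
    using that by (auto simp: psi_def)
  then show ?thesis using assms m by (auto split: if_splits)
qed


lemma nth_rem:
  assumes "u < length A + Suc (length B)" "u \<noteq> length A"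
  shows "(A @ z # B) ! u = (A @ B) ! (uprime (length A) u)"
  using assms by (auto simp: uprime_def nth_append)

lemma E_split:
  assumes "r < m" "m = length ls"
  shows "state_edges n ls bs = (\<Union>u\<in>{u. u < m \<and> u \<noteq> r}. LE n (fst (ls!u)) (bs!u) u (Suc u mod m))
     \<union> LE n (fst (ls!r)) (bs!r) r (Suc r mod m)"
  unfolding state_edges_LE using assms by auto

lemma E'_eq:
  assumes lb: "length bA = length A" "length bB = length B"
    and m: "m = length (A @ z # B)" and r: "r = length A"
  shows "state_edges n (A @ B) (bA @ bB) =
    (\<Union>u\<in>{u. u < m \<and> u \<noteq> r}. map_prod (phi (psi m r)) (phi (psi m r)) `
        LE n (fst ((A @ z # B)!u)) ((bA @ bz # bB)!u) u (Suc u mod m))"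
proof -
  have rm: "r < m" using m r by simp
  have "(\<Union>u\<in>{u. u < m \<and> u \<noteq> r}. map_prod (phi (psi m r)) (phi (psi m r)) `
        LE n (fst ((A @ z # B)!u)) ((bA @ bz # bB)!u) u (Suc u mod m)) =
      (\<Union>u\<in>{u. u < m \<and> u \<noteq> r}. LE n (fst ((A @ B)!(uprime r u))) ((bA @ bB)!(uprime r u))
          (uprime r u) (Suc (uprime r u) mod (m - 1)))"
  proof (rule SUP_cong[OF refl])
    fix u assume "u \<in> {u. u < m \<and> u \<noteq> r}"
    then have u: "u < m" "u \<noteq> r" by auto
    have "(A @ z # B) ! u = (A @ B) ! (uprime r u)" using nth_rem[of u A B z] u m r by simp
    moreover have "(bA @ bz # bB) ! u = (bA @ bB) ! (uprime r u)"
      using nth_rem[of u bA bB bz] u m r lb by simp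
    ultimately show "map_prod (phi (psi m r)) (phi (psi m r)) `
        LE n (fst ((A @ z # B)!u)) ((bA @ bz # bB)!u) u (Suc u mod m) =
      LE n (fst ((A @ B)!(uprime r u))) ((bA @ bB)!(uprime r u))
          (uprime r u) (Suc (uprime r u) mod (m - 1))"
      unfolding LE_img using psi_u[OF rm u] by simp
  qed
  also have "\<dots> = (\<Union>u'<m - 1. LE n (fst ((A @ B)!u')) ((bA @ bB)!u') u' (Suc u' mod (m - 1)))"
  proof -
    have "uprime r ` {u. u < m \<and> u \<noteq> r} = {..<m - 1}"
      using psi_u(2)[OF rm] psi_surj[OF rm] by fastforce
    moreover have "\<And>F. (\<Union>u\<in>{u. u < m \<and> u \<noteq> r}. F (uprime r u)) = (\<Union>x\<in>uprime r ` {u. u < m \<and> u \<noteq> r}. F x)"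
      by simp
    ultimately show ?thesis by simp
  qed
  also have "\<dots> = state_edges n (A @ B) (bA @ bB)"
    unfolding state_edges_LE using m by simp
  finally show ?thesis by simp
qed


lemma state_loops_SR: "state_loops n ls bs = card (state_nodes n ls // SR (state_edges n ls bs))"
  unfolding state_loops_def SR_def by simp

lemma phi_surj:
  assumes "r < m"
  shows "phi (psi m r) ` ({0..<m} \<times> {1..n}) = {0..<max 1 (m - 1)} \<times> {1..n}"
proof
  show "phi (psi m r) ` ({0..<m} \<times> {1..n}) \<subseteq> {0..<max 1 (m - 1)} \<times> {1..n}"
    using psi_range by (auto simp: phi_def)
  show "{0..<max 1 (m - 1)} \<times> {1..n} \<subseteq> phi (psi m r) ` ({0..<m} \<times> {1..n})"
  proof
    fix x assume x: "x \<in> {0..<max 1 (m - 1)} \<times> {1..n}"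
    obtain l p where lp: "x = (l,p)" by (cases x)
    show "x \<in> phi (psi m r) ` ({0..<m} \<times> {1..n})"
    proof (cases "m - 1 = 0")
      case True
      then have "l = 0" "m = 1" using x lp assms by auto
      then show ?thesis using x lp by (auto simp: phi_def psi_def image_iff)
    next
      case False
      then have "l < m - 1" using x lp by auto
      then obtain u where u: "u < m" "u \<noteq> r" "uprime r u = l" using psi_surj[OF assms] by blast
      then have "phi (psi m r) (u, p) = x" using psi_u[OF assms u(1,2)] lp by (simp add: phi_def)
      then show ?thesis using u x lp by force
    qed
  qed
qed

lemma loops_M1:
  assumes lb: "length bA = length A" "length bB = length B"
    and rng: "\<forall>x\<in>set (A @ z # B). 1 \<le> fst x \<and> Suc (fst x) \<le> n"
  shows "state_loops n (A @ z # B) (bA @ False # bB) = state_loops n (A @ B) (bA @ bB)"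
proof -
  define ls where "ls = A @ z # B"
  define bs where "bs = bA @ False # bB"
  define m where "m = length ls"
  define r where "r = length A"
  define \<Phi> where "\<Phi> = phi (psi m r)"
  define E where "E = state_edges n ls bs"
  define E' where "E' = state_edges n (A @ B) (bA @ bB)"
  have rm: "r < m" unfolding r_def m_def ls_def by simp
  have m1: "m - 1 = length (A @ B)" unfolding m_def ls_def by simp
  have V: "state_nodes n ls = {0..<m} \<times> {1..n}"
    unfolding state_nodes_def m_def ls_def by simp
  have V': "state_nodes n (A @ B) = {0..<max 1 (m - 1)} \<times> {1..n}"
    unfolding state_nodes_def m1 by simp
  have bsr: "bs ! r = False" unfolding bs_def r_def using lb by (simp add: nth_append)
  have Esplit: "E = (\<Union>u\<in>{u. u < m \<and> u \<noteq> r}. LE n (fst (ls!u)) (bs!u) u (Suc u mod m))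
     \<union> LE n (fst (ls!r)) (bs!r) r (Suc r mod m)"
    unfolding E_def using E_split[OF rm] m_def by simp
  have E'eq: "E' = (\<Union>u\<in>{u. u < m \<and> u \<noteq> r}. map_prod \<Phi> \<Phi> `
        LE n (fst (ls!u)) (bs!u) u (Suc u mod m))"
    unfolding E'_def \<Phi>_def ls_def bs_def
    by (rule E'_eq[OF lb]) (simp_all add: m_def ls_def r_def)
  have rngu: "1 \<le> fst (ls!u) \<and> Suc (fst (ls!u)) \<le> n" if "u < m" for u
    using rng that unfolding ls_def m_def by (metis nth_mem)
  have inV: "a \<in> {0..<m} \<times> {1..n} \<and> c \<in> {0..<m} \<times> {1..n}"
    if "(a,c) \<in> LE n (fst (ls!u)) (bs!u) u (Suc u mod m)" "u < m" for a c u
    using LE_nodes[of "fst (ls!u)" n u "{0..<m}" "Suc u mod m" a c] rngu[OF that(2)] that by auto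
  have iff: "(\<Phi> x, \<Phi> y) \<in> SR E' \<longleftrightarrow> (x,y) \<in> SR E"
    if "x \<in> {0..<m} \<times> {1..n}" "y \<in> {0..<m} \<times> {1..n}" for x y
  proof (rule lift_iff[OF _ _ _ _ that])
    fix a c assume ac: "(a,c) \<in> E"
    show "(\<Phi> a, \<Phi> c) \<in> SR E'"
    proof (cases "(a,c) \<in> LE n (fst (ls!r)) (bs!r) r (Suc r mod m)")
      case True
      then obtain p where "a = (r,p)" "c = (Suc r mod m, p)" using bsr by (auto simp: LE_def)
      then have "\<Phi> a = \<Phi> c" unfolding \<Phi>_def phi_def using psi_r[OF rm] by simp
      then show ?thesis by (simp add: SR_refl)
    next
      case False
      then obtain u where "u < m" "u \<noteq> r" "(a,c) \<in> LE n (fst (ls!u)) (bs!u) u (Suc u mod m)"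
        using ac Esplit by auto
      then have "(\<Phi> a, \<Phi> c) \<in> E'" unfolding E'eq by force
      then show ?thesis by (rule SR_edge)
    qed
  next
    fix u v assume "(u,v) \<in> E'"
    then obtain w a c where w: "w < m" "(a,c) \<in> LE n (fst (ls!w)) (bs!w) w (Suc w mod m)"
        "u = \<Phi> a" "v = \<Phi> c" and "w \<noteq> r"
      unfolding E'eq by auto
    then have "a \<in> {0..<m} \<times> {1..n}" "c \<in> {0..<m} \<times> {1..n}" using inV by auto
    moreover have "(a,c) \<in> E" using w \<open>w \<noteq> r\<close> Esplit by auto
    then have "(a,c) \<in> SR E" by (rule SR_edge)
    ultimately show "u \<in> \<Phi> ` ({0..<m} \<times> {1..n}) \<and> v \<in> \<Phi> ` ({0..<m} \<times> {1..n})"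
      and "\<exists>a\<in>{0..<m} \<times> {1..n}. \<exists>b\<in>{0..<m} \<times> {1..n}. \<Phi> a = u \<and> \<Phi> b = v \<and> (a, b) \<in> SR E"
      using w by auto
  next
    fix a c assume a: "a \<in> {0..<m} \<times> {1..n}" and c: "c \<in> {0..<m} \<times> {1..n}" and eq: "\<Phi> a = \<Phi> c"
    show "(a,c) \<in> SR E"
    proof (cases "a = c")
      case True then show ?thesis by (simp add: SR_refl)
    next
      case False
      obtain l1 p where l1: "a = (l1,p)" by (cases a)
      obtain l2 p2 where l2: "c = (l2,p2)" by (cases c)
      have pp: "p2 = p" "psi m r l1 = psi m r l2" using eq l1 l2 by (auto simp: \<Phi>_def phi_def)
      then have "l1 \<noteq> l2" using False l1 l2 by auto
      then have cs: "(l1 = r \<and> l2 = Suc r mod m) \<or> (l2 = r \<and> l1 = Suc r mod m)"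
        using psi_inj[OF rm _ _ pp(2)] a c l1 l2 by auto
      have "p \<in> {1..n}" using a l1 by auto
      then have "((r,p),(Suc r mod m,p)) \<in> E" using bsr Esplit by (auto simp: LE_def)
      then show ?thesis using cs l1 l2 pp(1) SR_edge by metis
    qed
  qed
  have "card (({0..<m} \<times> {1..n}) // SR E) = card (({0..<max 1 (m - 1)} \<times> {1..n}) // SR E')"
    apply (rule card_quot_map[OF equiv_SR equiv_SR phi_surj[OF rm]])
    using iff unfolding \<Phi>_def by blast
  then show ?thesis
    unfolding state_loops_SR E_def E'_def ls_def[symmetric] bs_def[symmetric] V V' by simp
qed


lemma phi_surj2:
  assumes "r < m" "2 \<le> m"
  shows "{0..<max 1 (m - 1)} \<times> {1..n} \<subseteq> phi (psi m r) ` (({0..<m} - {r}) \<times> {1..n})"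
proof
  fix x assume x: "x \<in> {0..<max 1 (m - 1)} \<times> {1..n}"
  obtain l p where lp: "x = (l,p)" by (cases x)
  have "l < m - 1" using x lp assms by auto
  then obtain u where u: "u < m" "u \<noteq> r" "uprime r u = l" using psi_surj[OF assms(1)] by blast
  then have "phi (psi m r) (u, p) = x" using psi_u[OF assms(1) u(1,2)] lp by (simp add: phi_def)
  then show "x \<in> phi (psi m r) ` (({0..<m} - {r}) \<times> {1..n})" using u x lp by force
qed

lemma suc_mod_eq:
  assumes "Suc u mod m = r" "0 < r" "r < m" "u < m"
  shows "u = r - 1"
proof (cases "Suc u < m")
  case True then show ?thesis using assms by simp
next
  case False then have "Suc u = m" using assms by simp
  then show ?thesis using assms by simp
qed

lemma loops_M2:
  assumes lb: "length bA = length A" "length bB = length B"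
    and rng: "\<forall>x\<in>set ((A @ [x0]) @ z # B). 1 \<le> fst x \<and> Suc (fst x) \<le> n"
    and same: "fst z = fst x0"
  shows "state_loops n ((A @ [x0]) @ z # B) ((bA @ [True]) @ True # bB) =
         state_loops n ((A @ [x0]) @ B) ((bA @ [True]) @ bB) + 1"
proof -
  define ls where "ls = (A @ [x0]) @ z # B"
  define bs where "bs = (bA @ [True]) @ True # bB"
  define m where "m = length ls"
  define r where "r = length (A @ [x0])"
  define \<Phi> where "\<Phi> = phi (psi m r)"
  define E where "E = state_edges n ls bs"
  define E' where "E' = state_edges n ((A @ [x0]) @ B) ((bA @ [True]) @ bB)"
  define i where "i = fst z"
  define s where "s = Suc r mod m"
  define q where "q = psi m r r"
  define Cs where "Cs = {(r,i),(r,Suc i)}"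
  define V0 where "V0 = {0..<m} \<times> {1..n}"
  have lb1: "length (bA @ [True]) = length (A @ [x0])" using lb by simp
  have rm: "r < m" unfolding r_def m_def ls_def by simp
  have r0: "0 < r" unfolding r_def by simp
  have m2: "2 \<le> m" unfolding m_def ls_def by simp
  have sr: "s \<noteq> r \<and> s < m"
  proof (cases "Suc r < m")
    case True then show ?thesis unfolding s_def by simp
  next
    case False then have "m = Suc r" using rm by simp
    then show ?thesis unfolding s_def using r0 by simp
  qed
  have qs: "psi m r s = q" unfolding q_def s_def by (rule psi_r[OF rm])
  have m1: "m - 1 = length ((A @ [x0]) @ B)" unfolding m_def ls_def by simp
  have V: "state_nodes n ls = V0"
    unfolding state_nodes_def m_def ls_def V0_def by simp
  have V': "state_nodes n ((A @ [x0]) @ B) = {0..<max 1 (m - 1)} \<times> {1..n}"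
    unfolding state_nodes_def m1 by simp
  have bsr: "bs ! r = True" "bs ! (r - 1) = True" "ls ! r = z" "ls ! (r - 1) = x0"
    unfolding bs_def r_def ls_def using lb by (auto simp: nth_append)
  have fi: "fst (ls ! r) = i" "fst (ls ! (r - 1)) = i" using bsr same by (auto simp: i_def)
  have rngu: "1 \<le> fst (ls!u) \<and> Suc (fst (ls!u)) \<le> n" if "u < m" for u
    using rng that unfolding ls_def m_def by (metis nth_mem)
  have irng: "1 \<le> i" "Suc i \<le> n" using rngu[OF rm] fi by auto
  have Esplit: "E = (\<Union>u\<in>{u. u < m \<and> u \<noteq> r}. LE n (fst (ls!u)) (bs!u) u (Suc u mod m))
     \<union> LE n i True r s"
    unfolding E_def using E_split[OF rm] m_def fi bsr s_def by simp
  have E'eq: "E' = (\<Union>u\<in>{u. u < m \<and> u \<noteq> r}. map_prod \<Phi> \<Phi> `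
        LE n (fst (ls!u)) (bs!u) u (Suc u mod m))"
    unfolding E'_def \<Phi>_def ls_def bs_def
    by (rule E'_eq[OF lb1 lb(2)]) (simp_all add: m_def ls_def r_def)
  have inV: "a \<in> V0 \<and> c \<in> V0"
    if "(a,c) \<in> LE n (fst (ls!u)) (bs!u) u (Suc u mod m)" "u < m" for a c u
    using LE_nodes[of "fst (ls!u)" n u "{0..<m}" "Suc u mod m" a c] rngu[OF that(2)] that
    by (auto simp: V0_def)
  have LEr1: "LE n (fst (ls!(r-1))) (bs!(r-1)) (r-1) (Suc (r-1) mod m) = LE n i True (r-1) r"
    using fi bsr r0 rm by simp
  have K1: "(a,c) = ((r,i),(r,Suc i))"
    if "u < m" "u \<noteq> r" "(a,c) \<in> LE n (fst (ls!u)) (bs!u) u (Suc u mod m)" "a \<in> Cs \<or> c \<in> Cs"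
    for a c u
  proof -
    have "Suc u mod m = r"
      using that unfolding LE_def Cs_def by (auto split: if_splits)
    then have "u = r - 1" using suc_mod_eq r0 rm that(1) by blast
    then have "(a,c) \<in> LE n i True (r-1) r" using that(3) LEr1 by simp
    then show ?thesis using that(4) r0 unfolding LE_def Cs_def by auto
  qed
  have K2: "(a,c) = ((r,i),(r,Suc i))"
    if "(a,c) \<in> LE n i True r s" "a \<in> Cs \<or> c \<in> Cs" for a c
    using that sr unfolding LE_def Cs_def by auto
  have K: "(a,c) = ((r,i),(r,Suc i))" if "(a,c) \<in> E" "a \<in> Cs \<or> c \<in> Cs" for a c
    using that K1 K2 Esplit by blast
  have cedge: "((r,i),(r,Suc i)) \<in> E" using Esplit by (auto simp: LE_def)
  have cls: "SR E `` {(r,i)} = Cs"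
  proof
    have "(y \<in> Cs)" if "((r,i),y) \<in> (E \<union> E\<inverse>)\<^sup>*" for y
      using that
    proof (induction rule: rtrancl_induct)
      case base then show ?case by (simp add: Cs_def)
    next
      case (step y w)
      then show ?case using K[of y w] K[of w y] by (auto simp: Cs_def)
    qed
    then show "SR E `` {(r,i)} \<subseteq> Cs" unfolding SR_def by auto
    show "Cs \<subseteq> SR E `` {(r,i)}" using cedge SR_edge SR_refl by (auto simp: Cs_def)
  qed
  have CsV0: "Cs \<subseteq> V0" "(r,i) \<in> V0" using irng rm by (auto simp: Cs_def V0_def)
  have step1: "card (V0 // SR E) = card ((V0 - Cs) // SR E) + 1"
    using card_quot_remove[OF equiv_SR _ CsV0(2), of E] cls CsV0 by (simp add: V0_def)
  have img: "\<Phi> ` (V0 - Cs) = {0..<max 1 (m - 1)} \<times> {1..n}"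
  proof
    show "\<Phi> ` (V0 - Cs) \<subseteq> {0..<max 1 (m - 1)} \<times> {1..n}"
      using phi_surj[OF rm, of n] unfolding \<Phi>_def V0_def by blast
    show "{0..<max 1 (m - 1)} \<times> {1..n} \<subseteq> \<Phi> ` (V0 - Cs)"
      using phi_surj2[OF rm m2, of n] unfolding \<Phi>_def V0_def Cs_def by blast
  qed
  have qedge: "((q,i),(q,Suc i)) \<in> E'"
  proof -
    have "((r,i),(r,Suc i)) \<in> LE n i True (r-1) r" by (simp add: LE_def)
    then have "((r,i),(r,Suc i)) \<in> LE n (fst (ls!(r-1))) (bs!(r-1)) (r-1) (Suc (r-1) mod m)"
      using LEr1 by simp
    moreover have "r - 1 < m" "r - 1 \<noteq> r" using rm r0 by auto
    ultimately have "(\<Phi> (r,i), \<Phi> (r,Suc i)) \<in> E'" unfolding E'eq by force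
    then show ?thesis by (simp add: \<Phi>_def phi_def q_def)
  qed
  have iff: "(\<Phi> x, \<Phi> y) \<in> SR E' \<longleftrightarrow> (x,y) \<in> SR E"
    if "x \<in> V0 - Cs" "y \<in> V0 - Cs" for x y
  proof (rule lift_iff[OF _ _ _ _ that])
    fix a c assume ac: "(a,c) \<in> E"
    show "(\<Phi> a, \<Phi> c) \<in> SR E'"
    proof (cases "(a,c) \<in> LE n i True r s")
      case True
      then consider p where "a = (r,p)" "c = (s, p)" | "(a,c) = ((r,i),(r,Suc i))"
        | "(a,c) = ((s,i),(s,Suc i))" by (auto simp: LE_def)
      then show ?thesis
      proof cases
        case 1
        then have "\<Phi> a = \<Phi> c" unfolding \<Phi>_def phi_def using qs q_def by simp
        then show ?thesis by (simp add: SR_refl)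
      next
        case 2 then show ?thesis using qedge SR_edge by (auto simp: \<Phi>_def phi_def q_def)
      next
        case 3 then show ?thesis using qedge SR_edge qs by (auto simp: \<Phi>_def phi_def)
      qed
    next
      case False
      then obtain u where "u < m" "u \<noteq> r" "(a,c) \<in> LE n (fst (ls!u)) (bs!u) u (Suc u mod m)"
        using ac Esplit by auto
      then have "(\<Phi> a, \<Phi> c) \<in> E'" unfolding E'eq by force
      then show ?thesis by (rule SR_edge)
    qed
  next
    fix u v assume "(u,v) \<in> E'"
    then obtain w a c where w: "w < m" "(a,c) \<in> LE n (fst (ls!w)) (bs!w) w (Suc w mod m)"
        "u = \<Phi> a" "v = \<Phi> c" and wr: "w \<noteq> r"
      unfolding E'eq by auto
    have "\<exists>a\<in>V0 - Cs. \<exists>b\<in>V0 - Cs. \<Phi> a = u \<and> \<Phi> b = v \<and> (a, b) \<in> SR E"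
    proof (cases "a \<in> Cs \<or> c \<in> Cs")
      case True
      then have ac: "(a,c) = ((r,i),(r,Suc i))" using K1 w wr by blast
      have "((s,i),(s,Suc i)) \<in> E" using Esplit by (auto simp: LE_def)
      then have "((s,i),(s,Suc i)) \<in> SR E" by (rule SR_edge)
      moreover have "(s,i) \<in> V0 - Cs" "(s,Suc i) \<in> V0 - Cs"
        using sr irng by (auto simp: V0_def Cs_def)
      moreover have "\<Phi> (s,i) = u" "\<Phi> (s,Suc i) = v"
        using ac w qs by (auto simp: \<Phi>_def phi_def q_def)
      ultimately show ?thesis by blast
    next
      case False
      moreover have "a \<in> V0" "c \<in> V0" using inV w by auto
      moreover have "(a,c) \<in> E" using w wr Esplit by auto
      then have "(a,c) \<in> SR E" by (rule SR_edge)
      ultimately show ?thesis using w by auto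
    qed
    then show "\<exists>a\<in>V0 - Cs. \<exists>b\<in>V0 - Cs. \<Phi> a = u \<and> \<Phi> b = v \<and> (a, b) \<in> SR E" .
    then show "u \<in> \<Phi> ` (V0 - Cs) \<and> v \<in> \<Phi> ` (V0 - Cs)" by blast
  next
    fix a c assume a: "a \<in> V0 - Cs" and c: "c \<in> V0 - Cs" and eq: "\<Phi> a = \<Phi> c"
    show "(a,c) \<in> SR E"
    proof (cases "a = c")
      case True then show ?thesis by (simp add: SR_refl)
    next
      case False
      obtain l1 p where l1: "a = (l1,p)" by (cases a)
      obtain l2 p2 where l2: "c = (l2,p2)" by (cases c)
      have pp: "p2 = p" "psi m r l1 = psi m r l2" using eq l1 l2 by (auto simp: \<Phi>_def phi_def)
      then have "l1 \<noteq> l2" using False l1 l2 by auto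
      then have cs: "(l1 = r \<and> l2 = s) \<or> (l2 = r \<and> l1 = s)"
        using psi_inj[OF rm _ _ pp(2)] a c l1 l2 unfolding s_def V0_def by auto
      have "p \<in> {1..n} - {i, Suc i}" using a c l1 l2 pp(1) cs by (auto simp: V0_def Cs_def)
      then have "((r,p),(s,p)) \<in> E" using Esplit by (auto simp: LE_def)
      then show ?thesis using cs l1 l2 pp(1) SR_edge by metis
    qed
  qed
  have "card ((V0 - Cs) // SR E) = card (({0..<max 1 (m - 1)} \<times> {1..n}) // SR E')"
    apply (rule card_quot_map[OF equiv_SR equiv_SR img])
    using iff by blast
  then show ?thesis
    using step1 unfolding state_loops_SR E_def E'_def ls_def[symmetric] bs_def[symmetric] V V' by simp
qed


definition sel :: "bool \<Rightarrow> real \<times> real \<Rightarrow> real" where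
  "sel b w = (if b then snd w else fst w)"

definition G :: "nat \<Rightarrow> real \<Rightarrow> (nat \<times> int) list \<Rightarrow> (real \<times> real) list \<Rightarrow> real" where
  "G n d ls ws = (\<Sum>bs\<in>{bs. length bs = length ls}.
      prod_list (map2 sel bs ws) * d ^ (state_loops n ls bs - 1))"

definition rngL :: "nat \<Rightarrow> (nat \<times> int) list \<Rightarrow> bool" where
  "rngL n ls = (\<forall>x\<in>set ls. 1 \<le> fst x \<and> Suc (fst x) \<le> n)"

lemma fin_len: "finite {xs :: bool list. length xs = n}"
  using finite_lists_length_eq[of "UNIV :: bool set" n] by simp

lemma sum_split2:
  fixes f :: "bool list \<Rightarrow> 'a::comm_monoid_add"
  shows "(\<Sum>bs\<in>{bs. length bs = a + c}. f bs) =
   (\<Sum>x\<in>{x. length x = a}. \<Sum>y\<in>{y. length y = c}. f (x @ y))"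
proof -
  have inj: "inj_on (\<lambda>(x,y). x @ y) ({x :: bool list. length x = a} \<times> {y. length y = c})"
    by (auto simp: inj_on_def)
  have img: "(\<lambda>(x,y). x @ y) ` ({x :: bool list. length x = a} \<times> {y. length y = c}) =
      {bs. length bs = a + c}"
  proof
    show "{bs. length bs = a + c} \<subseteq> (\<lambda>(x,y). x @ y) ` ({x :: bool list. length x = a} \<times> {y. length y = c})"
    proof
      fix bs :: "bool list" assume "bs \<in> {bs. length bs = a + c}"
      then show "bs \<in> (\<lambda>(x,y). x @ y) ` ({x. length x = a} \<times> {y. length y = c})"
        by (intro image_eqI[of _ _ "(take a bs, drop a bs)"]) auto
    qed
  qed auto
  have "(\<Sum>bs\<in>{bs. length bs = a + c}. f bs) =
      (\<Sum>p\<in>{x :: bool list. length x = a} \<times> {y. length y = c}. case p of (x,y) \<Rightarrow> f (x @ y))"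
    using sum.reindex[OF inj, of f] img by (simp add: case_prod_beta comp_def)
  also have "\<dots> = (\<Sum>x\<in>{x. length x = a}. \<Sum>y\<in>{y. length y = c}. f (x @ y))"
    by (simp add: sum.cartesian_product)
  finally show ?thesis .
qed

lemma len1: "{w :: bool list. length w = 1} = {[True],[False]}"
  by (auto simp: length_Suc_conv)

lemma sum_split3:
  fixes f :: "bool list \<Rightarrow> 'a::comm_monoid_add"
  shows "(\<Sum>bs\<in>{bs. length bs = a + Suc c}. f bs) =
   (\<Sum>x\<in>{x. length x = a}. \<Sum>y\<in>{y. length y = c}. f (x @ True # y) + f (x @ False # y))"
proof -
  have "(\<Sum>bs\<in>{bs. length bs = a + Suc c}. f bs) =
     (\<Sum>x\<in>{x. length x = a}. \<Sum>w\<in>{w. length w = 1 + c}. f (x @ w))"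
    using sum_split2[of f a "Suc c"] by simp
  also have "\<dots> = (\<Sum>x\<in>{x. length x = a}. \<Sum>w\<in>{w. length w = 1}. \<Sum>y\<in>{y. length y = c}. f (x @ w @ y))"
    by (subst sum_split2) simp
  also have "\<dots> = (\<Sum>x\<in>{x. length x = a}. \<Sum>y\<in>{y. length y = c}. f (x @ True # y) + f (x @ False # y))"
    unfolding len1 by (simp add: sum.distrib)
  finally show ?thesis .
qed

lemma prod_map2_append:
  "length x = length wA \<Longrightarrow>
   prod_list (map2 sel (x @ y) (wA @ wB)) = prod_list (map2 sel x wA) * prod_list (map2 sel y wB)"
  by simp

lemma state_loops_fst:
  assumes "map fst ls = map fst ls'"
  shows "state_loops n ls bs = state_loops n ls' bs"
proof -
  have len: "length ls = length ls'" using assms by (metis length_map)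
  have "fst (ls ! u) = fst (ls' ! u)" if "u < length ls" for u
    using assms that len by (metis nth_map)
  then have "state_edges n ls bs = state_edges n ls' bs"
    unfolding state_edges_LE len by auto
  moreover have "state_nodes n ls = state_nodes n ls'" unfolding state_nodes_def len by simp
  ultimately show ?thesis unfolding state_loops_def by simp
qed

lemma loops_pos: assumes "1 \<le> n" shows "1 \<le> state_loops n ls bs"
proof -
  have ne: "state_nodes n ls \<noteq> {}" using assms unfolding state_nodes_def by auto
  have fin: "finite (state_nodes n ls)" unfolding state_nodes_def by simp
  have "finite (state_nodes n ls // SR (state_edges n ls bs))"
    "state_nodes n ls // SR (state_edges n ls bs) \<noteq> {}"
    using ne fin unfolding quotient_image by auto
  then show ?thesis unfolding state_loops_SR by (simp add: Suc_le_eq card_gt_0_iff)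
qed


lemma G_remove:
  assumes lw: "length wA = length A" "length wB = length B" and rg: "rngL n (A @ z # B)"
  shows "G n d (A @ z # B) (wA @ (v, 0) # wB) = v * G n d (A @ B) (wA @ wB)"
proof -
  have r: "\<forall>x\<in>set (A @ z # B). 1 \<le> fst x \<and> Suc (fst x) \<le> n" using rg by (simp add: rngL_def)
  have "G n d (A @ z # B) (wA @ (v, 0) # wB) =
    (\<Sum>x\<in>{x. length x = length A}. \<Sum>y\<in>{y. length y = length B}.
       prod_list (map2 sel (x @ True # y) (wA @ (v, 0) # wB)) * d ^ (state_loops n (A @ z # B) (x @ True # y) - 1)
     + prod_list (map2 sel (x @ False # y) (wA @ (v, 0) # wB)) * d ^ (state_loops n (A @ z # B) (x @ False # y) - 1))"
    unfolding G_def using sum_split3[where a = "length A" and c = "length B"] by simp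
  also have "\<dots> = (\<Sum>x\<in>{x. length x = length A}. \<Sum>y\<in>{y. length y = length B}.
       v * (prod_list (map2 sel x wA) * prod_list (map2 sel y wB) * d ^ (state_loops n (A @ B) (x @ y) - 1)))"
  proof (intro sum.cong refl)
    fix x y :: "bool list" assume x: "x \<in> {x. length x = length A}" and y: "y \<in> {y. length y = length B}"
    have "state_loops n (A @ z # B) (x @ False # y) = state_loops n (A @ B) (x @ y)"
      using loops_M1[of x A y B z n] x y r by simp
    then show "prod_list (map2 sel (x @ True # y) (wA @ (v, 0) # wB)) * d ^ (state_loops n (A @ z # B) (x @ True # y) - 1)
     + prod_list (map2 sel (x @ False # y) (wA @ (v, 0) # wB)) * d ^ (state_loops n (A @ z # B) (x @ False # y) - 1) =
       v * (prod_list (map2 sel x wA) * prod_list (map2 sel y wB) * d ^ (state_loops n (A @ B) (x @ y) - 1))"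
      using x y lw by (simp add: zip_append sel_def)
  qed
  also have "\<dots> = v * (\<Sum>x\<in>{x. length x = length A}. \<Sum>y\<in>{y. length y = length B}.
       prod_list (map2 sel (x @ y) (wA @ wB)) * d ^ (state_loops n (A @ B) (x @ y) - 1))"
    unfolding sum_distrib_left
    by (intro sum.cong refl) (simp add: zip_append lw)
  also have "\<dots> = v * G n d (A @ B) (wA @ wB)"
    unfolding G_def length_append by (subst sum_split2) (rule refl)
  finally show ?thesis .
qed


lemma len0: "{w :: bool list. length w = 0} = {[]}" by auto

lemma sum_cons:
  fixes g :: "bool list \<Rightarrow> 'a::comm_monoid_add"
  shows "(\<Sum>y\<in>{y. length y = Suc c}. g y) = (\<Sum>y\<in>{y. length y = c}. g (True # y) + g (False # y))"
  using sum_split3[of g 0 c] by (simp add: len0)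

lemma G_merge:
  assumes lw: "length wA = length A" "length wB = length B" and rg: "rngL n (A @ x # y # B)"
    and same: "fst y = fst x" and n1: "1 \<le> n"
  shows "G n d (A @ x # y # B) (wA @ (v1,h1) # (v2,h2) # wB) =
         G n d (A @ x # B) (wA @ (v1 * v2, v1 * h2 + h1 * v2 + h1 * h2 * d) # wB)"
proof -
  have r: "\<forall>z\<in>set (A @ x # y # B). 1 \<le> fst z \<and> Suc (fst z) \<le> n" using rg by (simp add: rngL_def)
  have r1: "\<forall>z\<in>set (A @ y # B). 1 \<le> fst z \<and> Suc (fst z) \<le> n" using r by auto
  have r2: "\<forall>z\<in>set ((A @ [x]) @ y # B). 1 \<le> fst z \<and> Suc (fst z) \<le> n" using r by auto
  have fs: "map fst (A @ y # B) = map fst (A @ x # B)" using same by simp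
  define L where "L = (\<lambda>bs. state_loops n (A @ x # B) bs)"
  define f where "f = (\<lambda>bs. prod_list (map2 sel bs (wA @ (v1,h1) # (v2,h2) # wB)) *
      d ^ (state_loops n (A @ x # y # B) bs - 1))"
  define g where "g = (\<lambda>bs. prod_list (map2 sel bs (wA @ (v1 * v2, v1 * h2 + h1 * v2 + h1 * h2 * d) # wB)) *
      d ^ (L bs - 1))"
  have len: "length (A @ x # y # B) = length A + Suc (Suc (length B))" by simp
  have len2: "length (A @ x # B) = length A + Suc (length B)" by simp
  have "G n d (A @ x # y # B) (wA @ (v1,h1) # (v2,h2) # wB) =
    (\<Sum>a\<in>{a. length a = length A}. \<Sum>b\<in>{b. length b = Suc (length B)}. f (a @ True # b) + f (a @ False # b))"
    unfolding G_def f_def len by (rule sum_split3)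
  also have "\<dots> = (\<Sum>a\<in>{a. length a = length A}. \<Sum>b\<in>{b. length b = length B}.
      f (a @ True # True # b) + f (a @ False # True # b) + (f (a @ True # False # b) + f (a @ False # False # b)))"
    by (simp add: sum_cons)
  also have "\<dots> = (\<Sum>a\<in>{a. length a = length A}. \<Sum>b\<in>{b. length b = length B}. g (a @ True # b) + g (a @ False # b))"
  proof (intro sum.cong refl)
    fix a b :: "bool list" assume a: "a \<in> {a. length a = length A}" and b: "b \<in> {b. length b = length B}"
    have la: "length a = length A" "length b = length B" using a b by auto
    define P where "P = prod_list (map2 sel a wA)"
    define Q where "Q = prod_list (map2 sel b wB)"
    have l0: "state_loops n (A @ x # y # B) (a @ False # False # b) = L (a @ False # b)"
      using loops_M1[of a A "False # b" "y # B" x n] la r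
      by (simp add: L_def state_loops_fst[OF fs])
    have l1: "state_loops n (A @ x # y # B) (a @ False # True # b) = L (a @ True # b)"
      using loops_M1[of a A "True # b" "y # B" x n] la r
      by (simp add: L_def state_loops_fst[OF fs])
    have l2: "state_loops n (A @ x # y # B) (a @ True # False # b) = L (a @ True # b)"
      using loops_M1[of "a @ [True]" "A @ [x]" b B y n] la r2 by (simp add: L_def)
    have l3: "state_loops n (A @ x # y # B) (a @ True # True # b) = L (a @ True # b) + 1"
      using loops_M2[of a A b B x y n] la r2 same by (simp add: L_def)
    have pos: "1 \<le> L (a @ True # b)" unfolding L_def using n1 by (rule loops_pos)
    have dd: "d ^ (L (a @ True # b) + 1 - 1) = d * d ^ (L (a @ True # b) - 1)"
      using pos by (metis Suc_diff_1 Suc_eq_plus1 diff_Suc_1 le_numeral_extra(2) less_le_trans not_less_eq_eq power_Suc zero_less_one)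
    show "f (a @ True # True # b) + f (a @ False # True # b) + (f (a @ True # False # b) + f (a @ False # False # b)) =
      g (a @ True # b) + g (a @ False # b)"
      unfolding f_def g_def l0 l1 l2 l3 dd using la lw
      by (simp add: zip_append sel_def algebra_simps)
  qed
  also have "\<dots> = G n d (A @ x # B) (wA @ (v1 * v2, v1 * h2 + h1 * v2 + h1 * h2 * d) # wB)"
    unfolding G_def g_def L_def len2 by (rule sum_split3[symmetric])
  finally show ?thesis .
qed


definition wl :: "real \<Rightarrow> int \<Rightarrow> real \<times> real" where
  "wl s e = ((-1) powi e * s powi e, (-1) powi e * s powi (2 * e))"

lemma prod_map2_nth:
  "length bs = length ws \<Longrightarrow> prod_list (map2 f bs ws) = (\<Prod>t<length bs. f (bs!t) (ws!t))"
proof (induction bs arbitrary: ws)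
  case Nil then show ?case by simp
next
  case (Cons b bs)
  then obtain w ws' where ws: "ws = w # ws'" by (cases ws) auto
  then show ?case using Cons by (simp add: prod.lessThan_Suc_shift del: prod.lessThan_Suc)
qed

lemma powi_sum: fixes m :: nat and f :: "nat \<Rightarrow> int" shows "(\<Prod>t<m. (-1::real) powi (f t)) = (-1) powi (\<Sum>t<m. f t)"
  by (induction m) (simp_all add: power_int_add)

lemma jones_G:
  "jones_braid n w s = G n (- s - inverse s) (braid_letters w) (map (\<lambda>x. wl s (snd x)) (braid_letters w))"
proof -
  define ls where "ls = braid_letters w"
  define m where "m = length ls"
  have "jones_braid n w s = (\<Sum>bs\<in>{bs. length bs = m}.
      (-1) powi (\<Sum>t<m. snd (ls ! t)) *
      ((\<Prod>t<m. if bs ! t then s powi (2 * snd (ls ! t)) else s powi (snd (ls ! t)))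
         * (- s - inverse s) ^ (state_loops n ls bs - 1)))"
    unfolding jones_braid_def Let_def ls_def[symmetric] m_def[symmetric] by (simp only: sum_distrib_left)
  also have "\<dots> = G n (- s - inverse s) ls (map (\<lambda>x. wl s (snd x)) ls)"
    unfolding G_def m_def
  proof (intro sum.cong refl)
    fix bs :: "bool list" assume "bs \<in> {bs. length bs = length ls}"
    then have lb: "length bs = length ls" by simp
    have "prod_list (map2 sel bs (map (\<lambda>x. wl s (snd x)) ls)) =
        (\<Prod>t<length ls. (-1) powi (snd (ls ! t)) *
           (if bs ! t then s powi (2 * snd (ls ! t)) else s powi (snd (ls ! t))))"
      using lb by (auto simp: prod_map2_nth sel_def wl_def intro!: prod.cong)
    also have "\<dots> = (-1) powi (\<Sum>t<length ls. snd (ls ! t)) *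
        (\<Prod>t<length ls. if bs ! t then s powi (2 * snd (ls ! t)) else s powi (snd (ls ! t)))"
      by (simp add: prod.distrib powi_sum)
    finally show "(-1) powi (\<Sum>t<length ls. snd (ls ! t)) *
      ((\<Prod>t<length ls. if bs ! t then s powi (2 * snd (ls ! t)) else s powi (snd (ls ! t)))
         * (- s - inverse s) ^ (state_loops n ls bs - 1)) =
      prod_list (map2 sel bs (map (\<lambda>x. wl s (snd x)) ls)) * (- s - inverse s) ^ (state_loops n ls bs - 1)"
      by simp
  qed
  finally show ?thesis unfolding ls_def .
qed

lemma G_fst: "map fst ls = map fst ls' \<Longrightarrow> G n d ls ws = G n d ls' ws"
proof -
  assume h: "map fst ls = map fst ls'"
  then have len: "length ls = length ls'" by (metis length_map)
  show ?thesis unfolding G_def len using state_loops_fst[OF h] by simp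
qed

definition mrg :: "real \<Rightarrow> real \<times> real \<Rightarrow> real \<times> real \<Rightarrow> real \<times> real" where
  "mrg d p q = (fst p * fst q, fst p * snd q + snd p * fst q + snd p * snd q * d)"

fun Wr :: "real \<Rightarrow> real \<times> real \<Rightarrow> nat \<Rightarrow> real \<times> real" where
  "Wr d w0 0 = (1, 0)"
| "Wr d w0 (Suc r) = mrg d w0 (Wr d w0 r)"

lemma rngL_app: "rngL n (A @ B) = (rngL n A \<and> rngL n B)" "rngL n (x # B) = (1 \<le> fst x \<and> Suc (fst x) \<le> n \<and> rngL n B)"
  "rngL n [] = True"
  by (auto simp: rngL_def)

lemma G_block:
  assumes "length wA = length A" "length wB = length B" "rngL n (A @ (i,1) # B)" "1 \<le> n"
  shows "G n d (A @ replicate r (i,e) @ B) (wA @ replicate r w0 @ wB) = G n d (A @ (i,1) # B) (wA @ Wr d w0 r # wB)"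
  using assms
proof (induction r arbitrary: A wA)
  case 0
  then show ?case using G_remove[of wA A wB B n "(i,1)" d 1] by simp
next
  case (Suc r)
  have "G n d (A @ replicate (Suc r) (i,e) @ B) (wA @ replicate (Suc r) w0 @ wB) =
        G n d ((A @ [(i,e)]) @ replicate r (i,e) @ B) ((wA @ [w0]) @ replicate r w0 @ wB)" by simp
  also have "\<dots> = G n d ((A @ [(i,e)]) @ (i,1) # B) ((wA @ [w0]) @ Wr d w0 r # wB)"
    using Suc.prems by (intro Suc.IH) (auto simp: rngL_app)
  also have "\<dots> = G n d (A @ (i,e) # (i,1) # B) (wA @ (fst w0, snd w0) # (fst (Wr d w0 r), snd (Wr d w0 r)) # wB)"
    by simp
  also have "\<dots> = G n d (A @ (i,e) # B) (wA @ mrg d w0 (Wr d w0 r) # wB)"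
    using Suc.prems by (subst G_merge) (auto simp: rngL_app mrg_def)
  also have "\<dots> = G n d (A @ (i,1) # B) (wA @ Wr d w0 (Suc r) # wB)"
    by (simp add: G_fst)
  finally show ?case .
qed


lemma Wr_closed:
  fixes u d :: real
  assumes ud: "u * d = -1 - u^2"
  shows "Wr d (-u, -(u^2)) r = ((-u)^r, -u * (u^(3*r) - (-u)^r) / (u^2+1))"
proof (induction r)
  case 0 then show ?case by simp
next
  case (Suc r)
  have pos: "u^2 + 1 \<noteq> 0" by (metis add_nonneg_pos zero_le_power2 zero_less_one order_less_irrefl)
  have "u^2 * d = u * (u * d)" by (simp add: power2_eq_square)
  then have e: "u^2 * d = u * (-1 - u^2)" using ud by simp
  define X where "X = u^(3*r)"
  define Y where "Y = (-u)^r"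
  have X3: "u^(3 * Suc r) = u^3 * X" unfolding X_def by (simp add: power_add power_mult_distrib)
  define H where "H = -u * (X - Y) / (u^2+1)"
  have s1: "(-u) * H + (-(u^2)) * Y + (-(u^2)) * H * d = u^3 * H - u^2 * Y"
  proof -
    have "(-(u^2)) * H * d = - H * (u^2 * d)" by simp
    also have "\<dots> = - H * (u * (-1 - u^2))" using e by simp
    also have "\<dots> = H * u + H * u^3" by (simp add: algebra_simps power3_eq_cube power2_eq_square)
    finally show ?thesis by (simp add: algebra_simps)
  qed
  have s2: "u^3 * H - u^2 * Y = -u * (u^3 * X - (-u) * Y) / (u^2+1)"
    unfolding H_def using pos by (simp add: field_simps power3_eq_cube power2_eq_square)
  have "Wr d (-u, -(u^2)) (Suc r) = mrg d (-u, -(u^2)) (Y, H)"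
    using Suc by (simp add: X_def Y_def H_def)
  also have "\<dots> = ((-u) * Y, u^3 * H - u^2 * Y)" unfolding mrg_def using s1 by simp
  also have "\<dots> = ((-u)^(Suc r), -u * (u^(3 * Suc r) - (-u)^(Suc r)) / (u^2+1))"
    using s2 X3 by (simp add: Y_def)
  finally show ?case .
qed


lemma Wr_gen:
  fixes u d s :: real
  assumes ud: "u * d = -1 - u^2" and s0: "s \<noteq> 0" and us: "u / (u^2+1) = s / (s^2+1)"
    and p0: "P0v = u^(3*r) + (-1)^r * u^r * s^2" and p1: "P1v = (u^(3*r) - (-1)^r * u^r) / s"
  shows "Wr d (-u, -(u^2)) r = ((P0v - s * P1v) / (s^2+1), -(s^2) * P1v / (s^2+1))"
proof -
  have "0 \<le> s^2" by simp
  then have pos: "s^2 + 1 \<noteq> 0" by linarith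
  have mu: "(-u)^r = (-1)^r * u^r" by (rule power_minus)
  define X where "X = u^(3*r)"
  define Y where "Y = (-1)^r * u^r"
  have "s * ((X - Y) / s) = X - Y" using s0 by simp
  then have "P0v - s * P1v = Y * (s^2 + 1)" unfolding p0 p1 X_def[symmetric] Y_def[symmetric]
    by (simp add: algebra_simps)
  then have f: "(P0v - s * P1v) / (s^2+1) = (-1)^r * u^r" using pos by (simp add: Y_def)
  have "-(s^2) * ((X - Y) / s) = -(X - Y) * s" using s0 by (simp add: power2_eq_square field_simps)
  then have "-(s^2) * P1v = -(X - Y) * s" unfolding p1 X_def[symmetric] Y_def[symmetric] .
  then have g: "-(s^2) * P1v / (s^2+1) = -(u^(3*r) - (-1)^r * u^r) * (s / (s^2+1))"
    unfolding X_def Y_def by simp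
  have "0 \<le> u^2" by simp
  then have posu: "u^2 + 1 \<noteq> 0" by linarith
  show ?thesis unfolding Wr_closed[OF ud] f g us[symmetric] mu using posu by (simp add: field_simps)
qed

definition Wa :: "real \<Rightarrow> int \<Rightarrow> real \<times> real" where
  "Wa s a = Wr (- s - inverse s) (wl s (sgn a)) (nat \<bar>a\<bar>)"

lemma Wa_id:
  fixes s :: real
  assumes s0: "s \<noteq> 0"
  shows "Wa s a = ((P0 a s - s * P1 a s) / (s^2+1), -(s^2) * P1 a s / (s^2+1))"
proof -
  have "0 \<le> s^2" by simp
  then have pos: "s^2 + 1 \<noteq> 0" by linarith
  consider "a = 0" | r where "a = int r" "r > 0" | r where "a = - int r" "r > 0"
  proof -
    consider "a = 0" | "a > 0" | "a < 0" by linarith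
    then show ?thesis
    proof cases
      case 2 then have "a = int (nat a)" "nat a > 0" by auto
      then show ?thesis using that(2) by blast
    next
      case 3 then have "a = - int (nat (- a))" "nat (- a) > 0" by auto
      then show ?thesis using that(3) by blast
    qed (use that(1) in blast)
  qed
  then show ?thesis
  proof cases
    case 1
    then show ?thesis unfolding Wa_def P0_def P1_def using s0 pos
      by (simp add: field_simps power2_eq_square power_int_minus)
  next
    case 2
    have w: "wl s (sgn a) = (-s, -(s^2))" using 2 by (simp add: wl_def power2_eq_square)
    show ?thesis unfolding Wa_def w
    proof (rule Wr_gen)
      show "s * (- s - inverse s) = -1 - s^2" using s0 by (simp add: field_simps power2_eq_square)
      show "s / (s^2+1) = s / (s^2+1)" by simp
      show "P0 a s = s^(3 * nat \<bar>a\<bar>) + (-1)^(nat \<bar>a\<bar>) * s^(nat \<bar>a\<bar>) * s^2"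
      proof -
        have "3 * a = int (3 * r)" "a + 2 = int (r + 2)" using 2 by auto
        then show ?thesis unfolding P0_def using 2
          by (simp only: power_int_of_nat) (simp add: power_add power2_eq_square)
      qed
      show "P1 a s = (s^(3 * nat \<bar>a\<bar>) - (-1)^(nat \<bar>a\<bar>) * s^(nat \<bar>a\<bar>)) / s"
      proof -
        have e3: "3 * a = int (3 * r)" using 2 by simp
        have "s powi (3 * a - 1) = s powi (3 * a) / s powi 1" using s0 by (rule power_int_diff[OF disjI1])
        then have "s powi (3 * a - 1) = s^(3*r) / s" unfolding e3 power_int_of_nat by simp
        moreover have "s powi (a - 1) = s^r / s" using 2 s0 by (simp add: power_int_diff)
        moreover have "(-1::real) powi (a + 1) = - ((-1)^r)" using 2 by (simp add: power_int_add)
        ultimately show ?thesis unfolding P1_def using 2 s0 by (simp add: field_simps)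
      qed
    qed (rule s0)
  next
    case 3
    define u where "u = inverse s"
    have w: "wl s (sgn a) = (-u, -(u^2))" using 3 s0
      by (simp add: wl_def u_def power_int_minus power2_eq_square power_inverse)
    show ?thesis unfolding Wa_def w
    proof (rule Wr_gen)
      show "u * (- s - inverse s) = -1 - u^2" using s0 by (simp add: u_def field_simps power2_eq_square)
      show "u / (u^2+1) = s / (s^2+1)" using s0 pos by (simp add: u_def field_simps power2_eq_square)
      have pm: "s powi (- int k) = u^k" for k using s0 by (simp add: u_def power_int_minus power_inverse)
      have m1: "(-1::real) powi (- int r) = (-1)^r" by (cases "even r") (simp_all add: power_int_minus)
      show "P0 a s = u^(3 * nat \<bar>a\<bar>) + (-1)^(nat \<bar>a\<bar>) * u^(nat \<bar>a\<bar>) * s^2"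
      proof -
        have "3 * a = - int (3 * r)" using 3 by auto
        moreover have "s powi (a + 2) = u^r * s^2"
          using 3 s0 pm[of r] power_int_add[of s "- int r" 2] by simp
        ultimately show ?thesis unfolding P0_def using 3 pm[of "3*r"] m1 by simp
      qed
      show "P1 a s = (u^(3 * nat \<bar>a\<bar>) - (-1)^(nat \<bar>a\<bar>) * u^(nat \<bar>a\<bar>)) / s"
      proof -
        have "s powi (3 * a - 1) = u^(3*r) / s"
        proof -
          have "3 * a = - int (3 * r)" using 3 by auto
          then show ?thesis using s0 pm[of "3*r"] by (simp add: power_int_diff)
        qed
        moreover have "s powi (a - 1) = u^r / s" using 3 s0 pm[of r] by (simp add: power_int_diff)
        moreover have "(-1::real) powi (a + 1) = - ((-1)^r)"
          using 3 m1 power_int_add[of "-1::real" "- int r" 1] by simp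
        ultimately show ?thesis unfolding P1_def using 3 s0 by (simp add: field_simps)
      qed
    qed (rule s0)
  qed
qed


lemma braid_letters_simps:
  "braid_letters [] = []"
  "braid_letters ((i,a) # w) = replicate (nat \<bar>a\<bar>) (i, sgn a) @ braid_letters w"
  by (simp_all add: braid_letters_def)

lemma rngL_letters:
  "rngL n (map (\<lambda>p. (fst p, 1::int)) w) \<Longrightarrow> rngL n (braid_letters w)"
  by (induction w) (auto simp: braid_letters_def rngL_def)

lemma G_word:
  assumes "length wA = length A" "length wB = length B" "rngL n A" "rngL n B"
    "rngL n (map (\<lambda>p. (fst p, 1::int)) w)" "1 \<le> n"
  shows "G n d (A @ braid_letters w @ B) (wA @ map (\<lambda>x. wl s (snd x)) (braid_letters w) @ wB) =
    G n d (A @ map (\<lambda>p. (fst p, 1::int)) w @ B) (wA @ map (\<lambda>p. Wr d (wl s (sgn (snd p))) (nat \<bar>snd p\<bar>)) w @ wB)"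
  using assms
proof (induction w arbitrary: A wA)
  case Nil then show ?case by (simp add: braid_letters_simps)
next
  case (Cons p w)
  obtain i a where p: "p = (i,a)" by (cases p)
  have r1: "rngL n (A @ (i,1) # braid_letters w @ B)"
    using Cons.prems rngL_letters[of n w] p by (simp add: rngL_app)
  have "G n d (A @ braid_letters (p # w) @ B) (wA @ map (\<lambda>x. wl s (snd x)) (braid_letters (p # w)) @ wB) =
    G n d (A @ replicate (nat \<bar>a\<bar>) (i, sgn a) @ (braid_letters w @ B))
      (wA @ replicate (nat \<bar>a\<bar>) (wl s (sgn a)) @ (map (\<lambda>x. wl s (snd x)) (braid_letters w) @ wB))"
    by (simp add: p braid_letters_simps)
  also have "\<dots> = G n d (A @ (i,1) # (braid_letters w @ B))
      (wA @ Wr d (wl s (sgn a)) (nat \<bar>a\<bar>) # (map (\<lambda>x. wl s (snd x)) (braid_letters w) @ wB))"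
    using Cons.prems r1 by (intro G_block) auto
  also have "\<dots> = G n d ((A @ [(i,1)]) @ braid_letters w @ B)
      ((wA @ [Wr d (wl s (sgn a)) (nat \<bar>a\<bar>)]) @ map (\<lambda>x. wl s (snd x)) (braid_letters w) @ wB)"
    by simp
  also have "\<dots> = G n d ((A @ [(i,1)]) @ map (\<lambda>p. (fst p, 1::int)) w @ B)
      ((wA @ [Wr d (wl s (sgn a)) (nat \<bar>a\<bar>)]) @ map (\<lambda>p. Wr d (wl s (sgn (snd p))) (nat \<bar>snd p\<bar>)) w @ wB)"
    using Cons.prems p by (intro Cons.IH) (auto simp: rngL_app)
  finally show ?case using p by simp
qed

lemma jones_L:
  assumes "length ix = length as" "\<forall>t<length ix. 1 \<le> ix ! t \<and> ix ! t \<le> n - 1" "2 \<le> n"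
  shows "jones_braid n (zip ix as) s =
    G n (- s - inverse s) (map (\<lambda>i. (i, 1::int)) ix) (map (Wa s) as)"
proof -
  have e1: "map (\<lambda>p. (fst p, 1::int)) (zip ix as) = map (\<lambda>i. (i, 1::int)) ix"
  proof -
    have "map (\<lambda>p. (fst p, 1::int)) (zip ix as) = map (\<lambda>i. (i, 1::int)) (map fst (zip ix as))" by simp
    then show ?thesis using map_fst_zip[OF assms(1)] by simp
  qed
  have e2: "map (\<lambda>p. Wr (- s - inverse s) (wl s (sgn (snd p))) (nat \<bar>snd p\<bar>)) (zip ix as) = map (Wa s) as"
  proof -
    have "map (\<lambda>p. Wr (- s - inverse s) (wl s (sgn (snd p))) (nat \<bar>snd p\<bar>)) (zip ix as) = map (Wa s) (map snd (zip ix as))"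
      by (simp add: Wa_def)
    then show ?thesis using map_snd_zip[OF assms(1)] by simp
  qed
  have rg: "rngL n (map (\<lambda>i. (i, 1::int)) ix)"
    unfolding rngL_def
  proof
    fix x assume "x \<in> set (map (\<lambda>i. (i, 1::int)) ix)"
    then obtain t where t: "t < length ix" "x = (ix ! t, 1)" by (auto simp: in_set_conv_nth)
    have "1 \<le> ix ! t" "ix ! t \<le> n - 1" using assms(2) t(1) by auto
    then show "1 \<le> fst x \<and> Suc (fst x) \<le> n" using t(2) assms(3) by auto
  qed
  show ?thesis
    unfolding jones_G
    using G_word[of "[]" "[]" "[]" "[]" n "zip ix as" "- s - inverse s" s] assms rg e1 e2
    by (simp add: rngL_app)
qed

lemma sum_prod_js:
  fixes f :: "nat \<Rightarrow> nat \<Rightarrow> real"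
  shows "(\<Sum>js\<in>{js::nat list. length js = k \<and> set js \<subseteq> {0,1}}. \<Prod>t<k. f t (js!t)) = (\<Prod>t<k. f t 0 + f t 1)"
proof (induction k arbitrary: f)
  case 0
  have "{js::nat list. length js = 0 \<and> set js \<subseteq> {0,1}} = {[]}" by auto
  then show ?case by simp
next
  case (Suc k)
  define S where "S = {js::nat list. length js = k \<and> set js \<subseteq> {0,1}}"
  have fin: "finite S" unfolding S_def using finite_lists_length_eq[of "{0::nat,1}" k] by (simp add: conj_commute)
  have inj: "inj_on (\<lambda>(j,js). j # js) ({0::nat,1} \<times> S)" by (auto simp: inj_on_def)
  have img: "(\<lambda>(j,js). j # js) ` ({0::nat,1} \<times> S) = {js::nat list. length js = Suc k \<and> set js \<subseteq> {0,1}}"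
  proof
    show "{js::nat list. length js = Suc k \<and> set js \<subseteq> {0,1}} \<subseteq> (\<lambda>(j,js). j # js) ` ({0::nat,1} \<times> S)"
    proof
      fix js :: "nat list" assume "js \<in> {js. length js = Suc k \<and> set js \<subseteq> {0,1}}"
      then obtain j js' where "js = j # js'" "length js' = k" "set js' \<subseteq> {0,1}" "j \<in> {0,1}"
        by (cases js) auto
      then show "js \<in> (\<lambda>(j,js). j # js) ` ({0::nat,1} \<times> S)" unfolding S_def by force
    qed
  qed (auto simp: S_def)
  have "(\<Sum>js\<in>{js::nat list. length js = Suc k \<and> set js \<subseteq> {0,1}}. \<Prod>t<Suc k. f t (js!t)) =
      (\<Sum>q\<in>{0::nat,1} \<times> S. case q of (j,js) \<Rightarrow> \<Prod>t<Suc k. f t ((j # js)!t))"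
    using sum.reindex[OF inj, of "\<lambda>js. \<Prod>t<Suc k. f t (js!t)"] img by (simp add: comp_def case_prod_beta)
  also have "\<dots> = (\<Sum>j\<in>{0::nat,1}. \<Sum>js\<in>S. f 0 j * (\<Prod>t<k. f (Suc t) (js!t)))"
    by (simp add: sum.cartesian_product[symmetric] prod.lessThan_Suc_shift del: prod.lessThan_Suc)
  also have "\<dots> = (\<Sum>j\<in>{0::nat,1}. f 0 j * (\<Prod>t<k. f (Suc t) 0 + f (Suc t) 1))"
    using Suc.IH[of "\<lambda>t. f (Suc t)"] by (simp add: sum_distrib_left[symmetric] S_def)
  also have "\<dots> = (\<Prod>t<Suc k. f t 0 + f t 1)"
    by (simp add: prod.lessThan_Suc_shift algebra_simps del: prod.lessThan_Suc)
  finally show ?case .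
qed


lemma Wa_0: "Wa s 0 = (1, 0)" by (simp add: Wa_def)
lemma Wa_1: "Wa s 1 = (-s, -(s^2))" by (simp add: Wa_def mrg_def wl_def power2_eq_square)

lemma per_t:
  fixes s :: real assumes s0: "s \<noteq> 0"
  shows "Pj a 0 s * sel c (Wa s (int 0)) + Pj a 1 s * sel c (Wa s (int 1)) = (s^2+1) * sel c (Wa s a)"
proof -
  have "0 \<le> s^2" by simp
  then have pos: "s^2 + 1 \<noteq> 0" by linarith
  show ?thesis
    unfolding Pj_def sel_def using Wa_0[of s] Wa_1[of s] Wa_id[OF s0, of a] pos
    by (cases c) (simp_all add: field_simps)
qed

theorem theorem1p2:
  fixes n k :: nat and ix :: "nat list" and as :: "int list" and s :: real
  assumes "n \<ge> 2" and "k \<ge> 1"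
    and "length ix = k" and "length as = k"
    and "\<forall>t<k. 1 \<le> ix ! t \<and> ix ! t \<le> n - 1"
    and "s \<noteq> 0"
  shows "jones_braid n (zip ix as) s =
    (1 / (s\<^sup>2 + 1) ^ k) *
    (\<Sum>js \<in> {js :: nat list. length js = k \<and> set js \<subseteq> {0, 1}}.
       (\<Prod>t<k. Pj (as ! t) (js ! t) s) * jones_braid n (zip ix (map int js)) s)"
proof -
  define d where "d = - s - inverse s"
  define L where "L = map (\<lambda>i. (i, 1::int)) ix"
  define D where "D cs = d ^ (state_loops n L cs - 1)" for cs
  define JS where "JS = {js :: nat list. length js = k \<and> set js \<subseteq> {0, 1}}"
  define CS where "CS = {cs :: bool list. length cs = k}"
  have pos: "s^2 + 1 \<noteq> 0" using assms(6) by (metis add_nonneg_pos zero_le_power2 zero_less_one order_less_irrefl)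
  have lL: "length L = k" unfolding L_def using assms(3) by simp
  have rng: "\<forall>t<length ix. 1 \<le> ix ! t \<and> ix ! t \<le> n - 1" using assms(3,5) by simp
  have Gexp: "G n d L ws = (\<Sum>cs\<in>CS. (\<Prod>t<k. sel (cs!t) (ws!t)) * D cs)" if "length ws = k" for ws
    unfolding G_def D_def CS_def lL
    by (intro sum.cong refl) (simp add: prod_map2_nth that)
  have lhs: "jones_braid n (zip ix as) s = (\<Sum>cs\<in>CS. (\<Prod>t<k. sel (cs!t) (Wa s (as!t))) * D cs)"
    using jones_L[of ix as n s] assms(1,3,4) rng Gexp[of "map (Wa s) as"] assms(4)
    unfolding d_def[symmetric] L_def[symmetric] by simp
  have rhs1: "jones_braid n (zip ix (map int js)) s =
      (\<Sum>cs\<in>CS. (\<Prod>t<k. sel (cs!t) (Wa s (int (js!t)))) * D cs)" if "js \<in> JS" for js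
  proof -
    have lj: "length js = k" using that by (simp add: JS_def)
    show ?thesis
      using jones_L[of ix "map int js" n s] assms(1,3) lj rng Gexp[of "map (Wa s) (map int js)"]
      unfolding d_def[symmetric] L_def[symmetric] by simp
  qed
  have "(\<Sum>js\<in>JS. (\<Prod>t<k. Pj (as ! t) (js ! t) s) * jones_braid n (zip ix (map int js)) s) =
      (\<Sum>js\<in>JS. \<Sum>cs\<in>CS. (\<Prod>t<k. Pj (as ! t) (js ! t) s * sel (cs!t) (Wa s (int (js!t)))) * D cs)"
    by (intro sum.cong refl) (simp add: rhs1 sum_distrib_left prod.distrib mult.assoc)
  also have "\<dots> = (\<Sum>cs\<in>CS. D cs * (\<Sum>js\<in>JS. \<Prod>t<k. Pj (as ! t) (js ! t) s * sel (cs!t) (Wa s (int (js!t)))))"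
    by (subst sum.swap) (simp add: sum_distrib_left mult.commute)
  also have "\<dots> = (\<Sum>cs\<in>CS. D cs * (\<Prod>t<k. (s^2+1) * sel (cs!t) (Wa s (as!t))))"
  proof (intro sum.cong refl arg_cong2[where f = "(*)"])
    fix cs :: "bool list"
    have "(\<Sum>js\<in>JS. \<Prod>t<k. Pj (as ! t) (js ! t) s * sel (cs!t) (Wa s (int (js!t)))) =
        (\<Prod>t<k. Pj (as ! t) 0 s * sel (cs!t) (Wa s (int 0)) + Pj (as ! t) 1 s * sel (cs!t) (Wa s (int 1)))"
      unfolding JS_def by (rule sum_prod_js)
    also have "\<dots> = (\<Prod>t<k. (s^2+1) * sel (cs!t) (Wa s (as!t)))"
      by (rule prod.cong[OF refl]) (rule per_t[OF assms(6)])
    finally show "(\<Sum>js\<in>JS. \<Prod>t<k. Pj (as ! t) (js ! t) s * sel (cs!t) (Wa s (int (js!t)))) =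
        (\<Prod>t<k. (s^2+1) * sel (cs!t) (Wa s (as!t)))" .
  qed
  also have "\<dots> = (s^2+1)^k * (\<Sum>cs\<in>CS. (\<Prod>t<k. sel (cs!t) (Wa s (as!t))) * D cs)"
    by (simp add: prod.distrib sum_distrib_left mult_ac)
  finally have "(\<Sum>js\<in>JS. (\<Prod>t<k. Pj (as ! t) (js ! t) s) * jones_braid n (zip ix (map int js)) s) =
      (s^2+1)^k * jones_braid n (zip ix as) s" using lhs by simp
  then show ?thesis using pos unfolding JS_def by (simp add: field_simps)
qed


end
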